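(* Let $M$ be a Peano continuum. Every cut pair of $M$ is contained in a unique cyclic element of $M$.
   Context: A Peano continuum is a compact, connected, locally connected metrizable space. A (global) cut point of $M$ is $\eta\in M$ with $M\setminus\{\eta\}$ disconnected. A cyclic element is a subset $C\subseteq M$ that either consists of a single cut point, or contains a non-cut point $p$ together with all points $q$ not separated from $p$ by any cut point of $M$. A cut pair is a set of two distinct points $\{\zeta,\xi\}$ such that $M\setminus\{\zeta,\xi\}$ is disconnected but neither $\zeta$ nor $\xi$ is a cut point of $M$. *)

theory Defs
  imports "HOL-Analysis.Analysis"
begin

definition peano_continuum :: "'a topology \<Rightarrow> bool" where
  "peano_continuum X \<longleftrightarrow> compact_space X \<and> connected_space X \<and>
     locally_connected_space X \<and> metrizable_space X"

definition cut_point :: "'a topology \<Rightarrow> 'a \<Rightarrow> bool" where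
  "cut_point X e \<longleftrightarrow> e \<in> topspace X \<and> \<not> connectedin X (topspace X - {e})"

definition separates :: "'a topology \<Rightarrow> 'a \<Rightarrow> 'a \<Rightarrow> 'a \<Rightarrow> bool" where
  "separates X e p q \<longleftrightarrow> p \<in> topspace X - {e} \<and> q \<in> topspace X - {e} \<and>
     (\<exists>U V. openin (subtopology X (topspace X - {e})) U \<and>
            openin (subtopology X (topspace X - {e})) V \<and>
            U \<inter> V = {} \<and> U \<union> V = topspace X - {e} \<and> p \<in> U \<and> q \<in> V)"

definition cyclic_element :: "'a topology \<Rightarrow> 'a set \<Rightarrow> bool" where
  "cyclic_element X C \<longleftrightarrow>
     (\<exists>e. cut_point X e \<and> C = {e}) \<or>
     (\<exists>p \<in> topspace X. \<not> cut_point X p \<and>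
        C = {q \<in> topspace X. \<forall>e. cut_point X e \<longrightarrow> \<not> separates X e p q})"

definition cut_pair :: "'a topology \<Rightarrow> 'a \<Rightarrow> 'a \<Rightarrow> bool" where
  "cut_pair X z x \<longleftrightarrow> z \<in> topspace X \<and> x \<in> topspace X \<and> z \<noteq> x \<and>
     \<not> connectedin X (topspace X - {z, x}) \<and> \<not> cut_point X z \<and> \<not> cut_point X x"

end

theory Submission
  imports Defs
begin

lemma open_minus_pt:
  assumes "t1_space X" "a \<in> topspace X"
  shows "openin X (topspace X - {a})"
proof -
  have "closedin X {a}" by (rule closedin_t1_singleton[OF assms])
  thus ?thesis unfolding closedin_def by (rule conjunct2)
qed

lemma clopen_empty:
  assumes conn: "connectedin X S" and o: "openin X W" and W: "W \<subseteq> S"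
    and c: "closedin X K" and WK: "W = S \<inter> K" and e: "e \<in> S" "e \<notin> W"
  shows "W = {}"
proof -
  have Ssub: "S \<subseteq> topspace X" using conn by (simp add: connectedin_def)
  have cs: "connected_space (subtopology X S)" using conn by (simp add: connectedin_def)
  have "W = W \<inter> S" using W by blast
  hence "openin (subtopology X S) W"
    using o openin_subtopology by blast
  moreover have "closedin (subtopology X S) W"
    using c WK closedin_subtopology by (metis inf_commute)
  ultimately have "W = {} \<or> W = topspace (subtopology X S)"
    using cs connected_space_clopen_in by blast
  moreover have "topspace (subtopology X S) = S" using Ssub by auto
  ultimately show ?thesis using e by blast
qed
lemma no_sep:
  assumes t1: "t1_space X"
    and cz: "connectedin X (topspace X - {z})"
    and cx: "connectedin X (topspace X - {x})"
    and et: "e \<in> topspace X"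
    and sep: "separates X e z x"
  shows "connectedin X (topspace X - {z, x})"
proof (rule ccontr)
  let ?T = "topspace X"
  let ?S = "?T - {z, x}"
  assume nc: "\<not> connectedin X ?S"
  from sep obtain U V where
    U: "openin (subtopology X (?T - {e})) U" and
    V: "openin (subtopology X (?T - {e})) V" and
    UV: "U \<inter> V = {}" "U \<union> V = ?T - {e}" "z \<in> U" "x \<in> V"
    and zt: "z \<in> ?T - {e}" and xt: "x \<in> ?T - {e}"
    unfolding separates_def by blast
  have oe: "openin X (?T - {e})" by (rule open_minus_pt[OF t1 et])
  have Uo: "openin X U" using U by (simp add: openin_open_subtopology[OF oe])
  have Vo: "openin X V" using V by (simp add: openin_open_subtopology[OF oe])
  have So: "openin X ?S"
  proof -
    have "?S = (?T - {z}) \<inter> (?T - {x})" by blast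
    have "openin X (?T - {z})" using open_minus_pt[OF t1] zt by simp
    moreover have "openin X (?T - {x})" using open_minus_pt[OF t1] xt by simp
    ultimately have "openin X ((?T - {z}) \<inter> (?T - {x}))" by (rule openin_Int)
    thus ?thesis using \<open>?S = _\<close> by simp
  qed
  have "\<not> connected_space (subtopology X ?S)" using nc connectedin_def by blast
  then obtain A where Ao: "openin (subtopology X ?S) A" and Ac: "closedin (subtopology X ?S) A"
    and An: "A \<noteq> {}" and AS: "A \<noteq> topspace (subtopology X ?S)"
    using connected_space_clopen_in by blast
  have tS: "topspace (subtopology X ?S) = ?S" by auto
  have ASub: "A \<subseteq> ?S" using Ao openin_subset tS by metis
  have eS: "e \<in> ?S" using zt xt et by blast
  obtain B where Bo: "openin (subtopology X ?S) B" and Bc: "closedin (subtopology X ?S) B"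
    and Bn: "B \<noteq> {}" and BS: "B \<subseteq> ?S" and eB: "e \<notin> B"
  proof (cases "e \<in> A")
    case False
    then show ?thesis using that Ao Ac An ASub by blast
  next
    case True
    have "openin (subtopology X ?S) (?S - A)"
      using Ac tS by (metis closedin_def)
    moreover have "closedin (subtopology X ?S) (?S - A)"
      using Ao tS by (metis closedin_diff closedin_topspace)
    moreover have "?S - A \<noteq> {}" using AS ASub tS by blast
    ultimately show ?thesis using that True by blast
  qed
  have BoX: "openin X B" using openin_open_subtopology[OF So, of B] Bo by (rule iffD1[THEN conjunct1])
  obtain K where Kc: "closedin X K" and BK: "B = K \<inter> ?S"
    using Bc unfolding closedin_subtopology by (metis inf_commute)
  have eK: "e \<notin> K" using eB BK eS by blast
  have "B \<inter> U = {}"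
  proof (rule clopen_empty[OF cz, where K = "K \<inter> (?T - V)" and e = e])
    show "openin X (B \<inter> U)" using BoX Uo by (rule openin_Int)
    show "B \<inter> U \<subseteq> ?T - {z}" using BS by blast
    show "closedin X (K \<inter> (?T - V))" using Kc Vo by (simp add: closedin_Int closedin_diff)
    show "B \<inter> U = (?T - {z}) \<inter> (K \<inter> (?T - V))"
      using BK UV eK BS by auto
    show "e \<in> ?T - {z}" using et zt by blast
    show "e \<notin> B \<inter> U" using eB by blast
  qed
  moreover have "B \<inter> V = {}"
  proof (rule clopen_empty[OF cx, where K = "K \<inter> (?T - U)" and e = e])
    show "openin X (B \<inter> V)" using BoX Vo by (rule openin_Int)
    show "B \<inter> V \<subseteq> ?T - {x}" using BS by blast
    show "closedin X (K \<inter> (?T - U))" using Kc Uo by (simp add: closedin_Int closedin_diff)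
    show "B \<inter> V = (?T - {x}) \<inter> (K \<inter> (?T - U))"
      using BK UV eK BS by auto
    show "e \<in> ?T - {x}" using et xt by blast
    show "e \<notin> B \<inter> V" using eB by blast
  qed
  ultimately show False using Bn BS eB UV by blast
qed

lemma sep_sym: "separates X e p q \<Longrightarrow> separates X e q p"
  unfolding separates_def by blast
lemma sep_trans:
  assumes "separates X e p r" "q \<in> topspace X" "q \<noteq> e"
  shows "separates X e p q \<or> separates X e q r"
proof -
  obtain U V where h: "openin (subtopology X (topspace X - {e})) U" "openin (subtopology X (topspace X - {e})) V"
    "U \<inter> V = {}" "U \<union> V = topspace X - {e}" "p \<in> U" "r \<in> V" "p \<in> topspace X - {e}" "r \<in> topspace X - {e}"
    using assms(1) unfolding separates_def by blast
  have "q \<in> U \<or> q \<in> V" using h(4) assms by blast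
  thus ?thesis
  proof
    assume "q \<in> U" thus ?thesis unfolding separates_def using h assms by blast
  next
    assume "q \<in> V" thus ?thesis unfolding separates_def using h assms by blast
  qed
qed

lemma sep_irrefl: "\<not> separates X e p p"
  unfolding separates_def by blast

lemma orD: "P \<or> Q \<Longrightarrow> \<not> P \<Longrightarrow> Q" by blast

theorem lemma2p5:
  fixes X :: "'a topology" and z x :: 'a
  assumes "peano_continuum X"
    and "cut_pair X z x"
  shows "\<exists>!C. cyclic_element X C \<and> {z, x} \<subseteq> C"
proof -
  let ?T = "topspace X"
  have "metrizable_space X" using assms(1) unfolding peano_continuum_def by (elim conjE)
  hence t1: "t1_space X" by (intro Hausdorff_imp_t1_space metrizable_imp_Hausdorff_space)
  have zT: "z \<in> ?T" and xT: "x \<in> ?T" and zx: "z \<noteq> x"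
    and ncS: "\<not> connectedin X (?T - {z, x})"
    and ncz: "\<not> cut_point X z" and ncx: "\<not> cut_point X x"
    using assms(2) unfolding cut_pair_def by auto
  have cz: "connectedin X (?T - {z})" using ncz zT unfolding cut_point_def by simp
  have cx: "connectedin X (?T - {x})" using ncx xT unfolding cut_point_def by simp
  define C where "C = {q \<in> ?T. \<forall>e. cut_point X e \<longrightarrow> \<not> separates X e z q}"
  have nsep: "\<not> separates X e z x" if "cut_point X e" for e
  proof
    assume s: "separates X e z x"
    have "e \<in> ?T" using that unfolding cut_point_def by simp
    from no_sep[OF t1 cz cx this s] ncS show False by simp
  qed
  have "\<exists>p\<in>?T. \<not> cut_point X p \<and> C = {q \<in> ?T. \<forall>e. cut_point X e \<longrightarrow> \<not> separates X e p q}"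
    by (rule bexI[of _ z]) (simp_all add: ncz C_def zT)
  hence Cc: "cyclic_element X C" unfolding cyclic_element_def by (rule disjI2)
  have zC: "z \<in> C" unfolding C_def using zT by (simp add: sep_irrefl)
  have xC: "x \<in> C" unfolding C_def using xT nsep by simp
  show ?thesis
  proof (rule ex1I[of _ C])
    show "cyclic_element X C \<and> {z, x} \<subseteq> C" using Cc zC xC by simp
  next
    fix D assume D: "cyclic_element X D \<and> {z, x} \<subseteq> D"
    have notA: "\<not> (\<exists>e. cut_point X e \<and> D = {e})" using D zx by auto
    have "(\<exists>e. cut_point X e \<and> D = {e}) \<or> (\<exists>p\<in>?T. \<not> cut_point X p \<and>
        D = {q \<in> ?T. \<forall>e. cut_point X e \<longrightarrow> \<not> separates X e p q})"
      using D unfolding cyclic_element_def by (elim conjE)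
    from orD[OF this notA] obtain p where pT: "p \<in> ?T" and ncp: "\<not> cut_point X p"
      and Dd: "D = {q \<in> ?T. \<forall>e. cut_point X e \<longrightarrow> \<not> separates X e p q}"
      by (elim bexE conjE)
    have "z \<in> D" using D by simp
    hence zD: "\<forall>e. cut_point X e \<longrightarrow> \<not> separates X e p z" using Dd by simp
    show "D = C"
    proof (intro set_eqI iffI)
      fix q assume "q \<in> D"
      hence qT: "q \<in> ?T" and qD: "\<forall>e. cut_point X e \<longrightarrow> \<not> separates X e p q" using Dd by simp_all
      have "\<not> separates X e z q" if ce: "cut_point X e" for e
      proof
        assume s: "separates X e z q"
        have "p \<noteq> e" using ncp ce by metis
        then have "separates X e z p \<or> separates X e p q" using sep_trans[OF s pT] by simp
        moreover have "\<not> separates X e z p" using zD ce sep_sym by metis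
        moreover have "\<not> separates X e p q" using qD ce by simp
        ultimately show False by simp
      qed
      thus "q \<in> C" unfolding C_def using qT by simp
    next
      fix q assume "q \<in> C"
      hence qT: "q \<in> ?T" and qC: "\<forall>e. cut_point X e \<longrightarrow> \<not> separates X e z q" unfolding C_def by simp_all
      have "\<not> separates X e p q" if ce: "cut_point X e" for e
      proof
        assume s: "separates X e p q"
        have "z \<noteq> e" using ncz ce by metis
        then have "separates X e p z \<or> separates X e z q" using sep_trans[OF s zT] by simp
        moreover have "\<not> separates X e p z" using zD ce by simp
        moreover have "\<not> separates X e z q" using qC ce by simp
        ultimately show False by simp
      qed
      thus "q \<in> D" using Dd qT by simp
    qed
  qed
qed

end
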